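(* Let $\mathfrak B_r^-$ and $\mathfrak B_r^+$ be the branches of the discrete Neumann correspondence $\mathfrak B_r$ (with the same $\lambda_*$ and the same choice of $A^{1/2}(\lambda_* )$) corresponding to opposite partitions $\mathbf w_-=\{w_1,\dots,w_r\mid-w_1,\dots,-w_r\}$ and $\mathbf w_+=\{-w_1,\dots,-w_r\mid w_1,\dots,w_r\}$ of the eigenvalues of $L(\lambda_* )$. Then for every initial point $(X,P)\in T^*V_{n,r}$, $$\mathfrak B_r^-\circ\mathfrak B_r^+(X,P)=(-X,-P).$$
   Context: $A=\mathrm{diag}(a_1,\dots,a_n)$, $A(\lambda)=\lambda\mathbf I_n-A$, $\lambda_*\ne a_i$, $A^{1/2}(\lambda_* )$ a fixed diagonal square root. $T^*V_{n,r}=\{(X,P): X^TX=\mathbf I_r,\ X^TP+P^TX=0\}$. $L(\lambda)=\begin{pmatrix} X^TA(\lambda)^{-1}P & X^TA(\lambda)^{-1}X\\ \mathbf I_r-P^TA(\lambda)^{-1}P & -P^TA(\lambda)^{-1}X\end{pmatrix}$; its eigenvalues at $\lambda_*$ come in pairs $\pm w$, and its spectrum is preserved by the map. A partition $\{w_1,\dots,w_r\mid-w_1,\dots,-w_r\}$ chooses $r$ eigenvalues $w_1,\dots,w_r$ of $L(\lambda_* )$, distinct with $w_i\ne-w_j$; with $\begin{pmatrix}\Xi\\ \Upsilon\end{pmatrix}$ the matrix of corresponding eigenvectors, $\Gamma=\Upsilon\Xi^{-1}$ is a symmetric solution of $\Gamma\mathbf U\Gamma+\Gamma\mathbf V+\mathbf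 V^T\Gamma-\mathbf W=0$ ($\mathbf U=X^TA^{-1}(\lambda_* )X$, $\mathbf V=X^TA^{-1}(\lambda_* )P$, $\mathbf W=\mathbf I_r-P^TA^{-1}(\lambda_* )P$), and the branch of $\mathfrak B_r$ for this partition is $\tilde X=A^{-1/2}(\lambda_* )(P+X\Gamma)$, $\tilde P=-A^{1/2}(\lambda_* )X+\tilde X\Gamma$. The partition is applied at each step to the eigenvalues of the current Lax matrix at $\lambda_*$. *)

theory Defs
  imports "Jordan_Normal_Form.Matrix" "Jordan_Normal_Form.Determinant"
begin

definition Amat :: "nat \<Rightarrow> (nat \<Rightarrow> real) \<Rightarrow> real \<Rightarrow> complex mat" where
  "Amat n a lam = mat n n (\<lambda>(i,j). if i = j then complex_of_real (lam - a i) else 0)"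

definition Ainv :: "nat \<Rightarrow> (nat \<Rightarrow> real) \<Rightarrow> real \<Rightarrow> complex mat" where
  "Ainv n a lam = mat n n (\<lambda>(i,j). if i = j then complex_of_real (1 / (lam - a i)) else 0)"

definition diag_inv :: "complex mat \<Rightarrow> complex mat" where
  "diag_inv S = mat (dim_row S) (dim_col S) (\<lambda>(i,j). if i = j then 1 / S $$ (i,i) else 0)"

definition Lax :: "nat \<Rightarrow> nat \<Rightarrow> (nat \<Rightarrow> real) \<Rightarrow> real \<Rightarrow> complex mat \<Rightarrow> complex mat \<Rightarrow> complex mat" where
  "Lax n r a lam X P =
     four_block_mat
       (transpose_mat X * Ainv n a lam * P) (transpose_mat X * Ainv n a lam * X)
       (1\<^sub>m r - transpose_mat P * Ainv n a lam * P) (- (transpose_mat P * Ainv n a lam * X))"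

definition diag_of :: "nat \<Rightarrow> (nat \<Rightarrow> complex) \<Rightarrow> complex mat" where
  "diag_of r w = mat r r (\<lambda>(i,j). if i = j then w i else 0)"

text \<open>Branch of the discrete Neumann correspondence B_r for the partition choosing the
  eigenvalues w 0, ..., w (r-1) of the current Lax matrix L(lam):
  [Xi; Upsilon] is the matrix whose columns are eigenvectors for w 0..w (r-1),
  Gamma = Upsilon Xi^{-1}, and (X,P) is mapped to (X', P').\<close>
definition neumann_branch ::
  "nat \<Rightarrow> nat \<Rightarrow> (nat \<Rightarrow> real) \<Rightarrow> real \<Rightarrow> complex mat \<Rightarrow> (nat \<Rightarrow> complex) \<Rightarrow>
   complex mat \<Rightarrow> complex mat \<Rightarrow> complex mat \<Rightarrow> complex mat \<Rightarrow> bool" where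
  "neumann_branch n r a lam S w X P X' P' \<longleftrightarrow>
     (\<exists>Xi Ups Xiinv. Xi \<in> carrier_mat r r \<and> Ups \<in> carrier_mat r r \<and> Xiinv \<in> carrier_mat r r \<and>
        Xi * Xiinv = 1\<^sub>m r \<and> Xiinv * Xi = 1\<^sub>m r \<and>
        Lax n r a lam X P * (Xi @\<^sub>r Ups) = (Xi @\<^sub>r Ups) * diag_of r w \<and>
        (let Gam = Ups * Xiinv in
          X' = diag_inv S * (P + X * Gam) \<and>
          P' = - (S * X) + X' * Gam))"

end

theory Submission
  imports Defs
begin


lemma diag_of_carrier[simp]: "diag_of r w \<in> carrier_mat r r"
  by (simp add: diag_of_def)

lemma diag_of_dims[simp]: "dim_row (diag_of r w) = r" "dim_col (diag_of r w) = r"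
  by (simp_all add: diag_of_def)

lemma mult_diag_index:
  assumes E: "E \<in> carrier_mat m r" and i: "i < m" and j: "j < r"
  shows "(E * diag_of r d) $$ (i,j) = E $$ (i,j) * d j"
proof -
  have "(E * diag_of r d) $$ (i,j) = (\<Sum>k<r. E $$ (i,k) * (if k = j then d k else 0))"
    using E i j by (simp add: diag_of_def scalar_prod_def lessThan_atLeast0 cong: if_cong)
  also have "\<dots> = E $$ (i,j) * d j"
    using j by (simp add: if_distrib cong: if_cong)
  finally show ?thesis .
qed

lemma diag_mult_index:
  assumes E: "E \<in> carrier_mat r m" and i: "i < r" and j: "j < m"
  shows "(diag_of r d * E) $$ (i,j) = d i * E $$ (i,j)"
proof -
  have "(diag_of r d * E) $$ (i,j) = (\<Sum>k<r. (if i = k then d i else 0) * E $$ (k,j))"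
    using E i j by (simp add: diag_of_def scalar_prod_def lessThan_atLeast0 cong: if_cong)
  also have "\<dots> = (\<Sum>k<r. if k = i then d i * E $$ (i,j) else 0)"
    by (rule sum.cong) auto
  also have "\<dots> = d i * E $$ (i,j)"
    using i by simp
  finally show ?thesis .
qed

lemma sylv_zero:
  fixes E :: "complex mat"
  assumes E: "E \<in> carrier_mat r r" and eq: "E * diag_of r d = diag_of r (\<lambda>i. - d i) * E"
    and nz: "\<forall>i<r. \<forall>j<r. d i \<noteq> - d j"
  shows "E = 0\<^sub>m r r"
proof (rule eq_matI)
  fix i j assume i: "i < dim_row (0\<^sub>m r r :: complex mat)" and j: "j < dim_col (0\<^sub>m r r :: complex mat)"
  hence i: "i < r" and j: "j < r" by auto
  have "E $$ (i,j) * d j = - d i * E $$ (i,j)"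
    using arg_cong[OF eq, of "\<lambda>M. M $$ (i,j)"] mult_diag_index[OF E i j] diag_mult_index[OF E i j]
    by simp
  hence "E $$ (i,j) * (d i + d j) = 0" by (simp add: algebra_simps)
  moreover have "d i + d j \<noteq> 0" using nz i j by (metis add_eq_0_iff)
  ultimately show "E $$ (i,j) = 0\<^sub>m r r $$ (i,j)" using i j by simp
qed (use E in auto)

lemma diag_of_mult: "diag_of n f * diag_of n g = diag_of n (\<lambda>i. f i * g i)"
proof (rule eq_matI)
  fix i j assume "i < dim_row (diag_of n (\<lambda>i. f i * g i))" "j < dim_col (diag_of n (\<lambda>i. f i * g i))"
  hence i: "i < n" and j: "j < n" by (auto simp: diag_of_def)
  show "(diag_of n f * diag_of n g) $$ (i,j) = diag_of n (\<lambda>i. f i * g i) $$ (i,j)"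
    using mult_diag_index[OF diag_of_carrier i j, of f g] i j by (simp add: diag_of_def)
qed (auto simp: diag_of_def)

lemma diag_of_transpose: "transpose_mat (diag_of n f) = diag_of n f"
  by (rule eq_matI, auto simp: diag_of_def)

lemma diag_of_one: "(\<And>i. i < n \<Longrightarrow> f i = 1) \<Longrightarrow> diag_of n f = 1\<^sub>m n"
  by (rule eq_matI, auto simp: diag_of_def)

lemma diag_of_cong: "(\<And>i. i < n \<Longrightarrow> f i = g i) \<Longrightarrow> diag_of n f = diag_of n g"
  by (rule eq_matI, auto simp: diag_of_def)

lemma diagonal_is_diag_of:
  assumes "S \<in> carrier_mat n n" "diagonal_mat S"
  shows "S = diag_of n (\<lambda>i. S $$ (i,i))"
  using assms by (intro eq_matI, auto simp: diag_of_def diagonal_mat_def)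

lemma four_block_append_rows:
  assumes "A \<in> carrier_mat r1 n1" "B \<in> carrier_mat r1 n2" "C \<in> carrier_mat r2 n1" "D \<in> carrier_mat r2 n2"
    "E \<in> carrier_mat n1 m" "F \<in> carrier_mat n2 m"
  shows "four_block_mat A B C D * (E @\<^sub>r F) = (A * E + B * F) @\<^sub>r (C * E + D * F)"
proof -
  have e: "dim_row E = n1" "dim_row F = n2" using assms by auto
  show ?thesis
  unfolding append_rows_def e
  apply (subst mult_four_block_mat[where ?B2.0="0\<^sub>m n1 0" and ?D2.0="0\<^sub>m n2 0", OF assms(1-4) assms(5) _ assms(6)])
    apply auto[2]
  apply (rule cong_four_block_mat)
  using assms by (auto intro!: eq_matI)
qed

lemma append_rows_inj:
  assumes "A \<in> carrier_mat r1 m" "B \<in> carrier_mat r2 m" "C \<in> carrier_mat r1 m" "D \<in> carrier_mat r2 m"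
    and "A @\<^sub>r B = C @\<^sub>r D"
  shows "A = C \<and> B = D"
proof
  show "A = C"
  proof (rule eq_matI)
    fix i j assume "i < dim_row C" "j < dim_col C"
    thus "A $$ (i,j) = C $$ (i,j)"
      using arg_cong[OF assms(5), of "\<lambda>M. M $$ (i,j)"] assms(1-4) by (auto simp: append_rows_def)
  qed (use assms in auto)
  show "B = D"
  proof (rule eq_matI)
    fix i j assume "i < dim_row D" "j < dim_col D"
    thus "B $$ (i,j) = D $$ (i,j)"
      using arg_cong[OF assms(5), of "\<lambda>M. M $$ (i+r1,j)"] assms(1-4) by (auto simp: append_rows_def)
  qed (use assms in auto)
qed

lemma cm: "A \<in> carrier_mat (dim_row A) (dim_col A)" by (rule carrier_matI) auto
lemma cm': "dim_row A = r \<Longrightarrow> dim_col A = c \<Longrightarrow> A \<in> carrier_mat r c" by (rule carrier_matI)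

lemma assoc': "dim_col A = dim_row B \<Longrightarrow> dim_col B = dim_row C \<Longrightarrow> A * B * C = A * (B * C)"
  by (rule assoc_mult_mat[OF cm cm'[of B "dim_col A" "dim_col B"] cm'[of C "dim_col B" "dim_col C"]]) auto
lemma distL': "dim_col A = dim_row B \<Longrightarrow> dim_row B = dim_row C \<Longrightarrow> dim_col B = dim_col C \<Longrightarrow> A * (B + C) = A * B + A * C"
  by (rule mult_add_distrib_mat[OF cm cm'[of B "dim_col A" "dim_col B"] cm'[of C "dim_col A" "dim_col B"]]) auto
lemma distR': "dim_row A = dim_row B \<Longrightarrow> dim_col A = dim_col B \<Longrightarrow> dim_col A = dim_row C \<Longrightarrow> (A + B) * C = A * C + B * C"
  by (rule add_mult_distrib_mat[OF cm cm'[of B "dim_row A" "dim_col A"] cm'[of C "dim_col A" "dim_col C"]]) auto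
lemma distLm': "dim_col (A::'a::ring mat) = dim_row B \<Longrightarrow> dim_row B = dim_row C \<Longrightarrow> dim_col B = dim_col C \<Longrightarrow> A * (B - C) = A * B - A * C"
  by (rule mult_minus_distrib_mat[OF cm cm'[of B "dim_col A" "dim_col B"] cm'[of C "dim_col A" "dim_col B"]]) auto
lemma distRm': "dim_row (A::'a::ring mat) = dim_row B \<Longrightarrow> dim_col A = dim_col B \<Longrightarrow> dim_col A = dim_row C \<Longrightarrow> (A - B) * C = A * C - B * C"
  by (rule minus_mult_distrib_mat[OF cm cm'[of B "dim_row A" "dim_col A"] cm'[of C "dim_col A" "dim_col C"]]) auto
lemma transpose_mult': "dim_col (A::'a::comm_semiring_0 mat) = dim_row B \<Longrightarrow> transpose_mat (A * B) = transpose_mat B * transpose_mat A"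
  by (rule transpose_mult[OF cm cm'[of B "dim_col A" "dim_col B"]]) auto
lemma transpose_add': "dim_row A = dim_row B \<Longrightarrow> dim_col A = dim_col B \<Longrightarrow> transpose_mat (A + B) = transpose_mat A + transpose_mat B"
  by (rule transpose_add[OF cm cm'[of B "dim_row A" "dim_col A"]]) auto
lemma transpose_minus': "dim_row A = dim_row B \<Longrightarrow> dim_col A = dim_col B \<Longrightarrow> transpose_mat (A - B) = transpose_mat A - transpose_mat B"
  by (rule transpose_minus[OF cm cm'[of B "dim_row A" "dim_col A"]]) auto

lemmas msimps = assoc' distL' distR' distLm' distRm' transpose_mult' transpose_add' transpose_minus'
  transpose_uminus uminus_mult_left_mat uminus_mult_right_mat

lemma diag_neg_mult: "K \<in> carrier_mat r m \<Longrightarrow> diag_of r (\<lambda>i. - (d i::complex)) * K = - (diag_of r d * K)"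
proof (rule eq_matI)
  fix i j assume a: "K \<in> carrier_mat r m" "i < dim_row (- (diag_of r d * K))" "j < dim_col (- (diag_of r d * K))"
  hence i: "i < r" and j: "j < m" by (auto simp: diag_of_def)
  show "(diag_of r (\<lambda>i. - d i) * K) $$ (i, j) = (- (diag_of r d * K)) $$ (i, j)"
    using diag_mult_index[OF a(1) i j, of "\<lambda>i. - d i"] diag_mult_index[OF a(1) i j, of d] i j a(1)
    by (simp add: diag_of_def)
qed (auto simp: diag_of_def)


lemma append_rows_mult:
  assumes A: "A \<in> carrier_mat nr1 m" and B: "B \<in> carrier_mat nr2 m" and C: "C \<in> carrier_mat m k"
  shows "(A @\<^sub>r B) * C = (A * C) @\<^sub>r (B * C)"
proof -
  have C': "C = four_block_mat C (0\<^sub>m m 0) (0\<^sub>m 0 k) (0\<^sub>m 0 0)"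
    using C by (intro eq_matI) auto
  have e: "dim_row A = nr1" "dim_row B = nr2" "dim_row (A * C) = nr1" "dim_row (B * C) = nr2" using A B by auto
  have "(A @\<^sub>r B) * C = four_block_mat A (0\<^sub>m nr1 0) B (0\<^sub>m nr2 0) * four_block_mat C (0\<^sub>m m 0) (0\<^sub>m 0 k) (0\<^sub>m 0 0)"
    unfolding append_rows_def e using C' by simp
  also have "\<dots> = four_block_mat (A * C + 0\<^sub>m nr1 0 * 0\<^sub>m 0 k) (A * 0\<^sub>m m 0 + 0\<^sub>m nr1 0 * 0\<^sub>m 0 0)
      (B * C + 0\<^sub>m nr2 0 * 0\<^sub>m 0 k) (B * 0\<^sub>m m 0 + 0\<^sub>m nr2 0 * 0\<^sub>m 0 0)"
    by (rule mult_four_block_mat[OF A _ B _ C]) auto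
  also have "\<dots> = (A * C) @\<^sub>r (B * C)"
    unfolding append_rows_def e
    by (rule cong_four_block_mat) (use A B C in \<open>auto intro!: eq_matI\<close>)
  finally show ?thesis .
qed

lemma gamma_sym:
  fixes U V W Xi Ups Xii :: "complex mat"
  assumes c: "U \<in> carrier_mat r r" "V \<in> carrier_mat r r" "W \<in> carrier_mat r r"
    "Xi \<in> carrier_mat r r" "Ups \<in> carrier_mat r r" "Xii \<in> carrier_mat r r"
    and sU: "transpose_mat U = U" and sW: "transpose_mat W = W"
    and inv: "Xi * Xii = 1\<^sub>m r" "Xii * Xi = 1\<^sub>m r"
    and eqa: "V * Xi + U * Ups = Xi * diag_of r d"
    and eqb: "W * Xi + (- (transpose_mat V)) * Ups = Ups * diag_of r d"
    and nz: "\<forall>i<r. \<forall>j<r. d i \<noteq> - d j"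
  shows "transpose_mat (Ups * Xii) = Ups * Xii"
proof -
  define D where "D = diag_of r d"
  have cD: "D \<in> carrier_mat r r" by (simp add: D_def)
  note dims = c[unfolded carrier_mat_def, simplified] cD[unfolded carrier_mat_def, simplified]
  define K where "K = transpose_mat Xi * Ups + - (transpose_mat Ups * Xi)"
  have cK: "K \<in> carrier_mat r r" unfolding K_def using c by auto
  define R where "R = transpose_mat Xi * (W * Xi) + - (transpose_mat Xi * (transpose_mat V * Ups))
     + - (transpose_mat Ups * (V * Xi)) + - (transpose_mat Ups * (U * Ups))"
  have e1: "transpose_mat Xi * (W * Xi) + - (transpose_mat Xi * (transpose_mat V * Ups)) = transpose_mat Xi * (Ups * D)"
  proof -
    have "transpose_mat Xi * (W * Xi + (- (transpose_mat V)) * Ups) = transpose_mat Xi * (Ups * D)"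
      using eqb D_def by simp
    thus ?thesis using dims by (simp add: msimps)
  qed
  have e2: "transpose_mat Ups * (V * Xi) + transpose_mat Ups * (U * Ups) = transpose_mat Ups * (Xi * D)"
  proof -
    have "transpose_mat Ups * (V * Xi + U * Ups) = transpose_mat Ups * (Xi * D)"
      using eqa D_def by simp
    thus ?thesis using dims by (simp add: msimps)
  qed
  have RKD: "R = K * D"
  proof -
    have "K * D = transpose_mat Xi * (Ups * D) + - (transpose_mat Ups * (Xi * D))"
      unfolding K_def using dims by (simp add: msimps)
    also have "\<dots> = R" unfolding R_def e1[symmetric] e2[symmetric]
      by (rule eq_matI) (use dims in \<open>simp_all del: index_mult_mat(1)\<close>)
    finally show ?thesis by simp
  qed
  have RT: "transpose_mat R = R"
    unfolding R_def using dims sU sW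
    by (simp add: msimps) (rule eq_matI, simp_all add: dims del: index_mult_mat(1))
  have KT: "transpose_mat K = - K"
    unfolding K_def using dims
    by (simp add: msimps) (rule eq_matI, simp_all add: dims del: index_mult_mat(1))
  have "K * D = transpose_mat (K * D)" using RT RKD by simp
  also have "\<dots> = D * transpose_mat K" using dims cK by (simp add: msimps D_def diag_of_transpose)
  also have "\<dots> = diag_of r (\<lambda>i. - d i) * K" using cK KT by (simp add: diag_neg_mult D_def uminus_mult_right_mat)
  finally have K0: "K = 0\<^sub>m r r" using sylv_zero[OF cK _ nz] D_def by simp
  have KK: "transpose_mat Ups * Xi = transpose_mat Xi * Ups"
  proof (rule eq_matI)
    fix i j assume ij: "i < dim_row (transpose_mat Xi * Ups)" "j < dim_col (transpose_mat Xi * Ups)"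
    have "K $$ (i,j) = 0" using K0 ij dims by simp
    thus "(transpose_mat Ups * Xi) $$ (i,j) = (transpose_mat Xi * Ups) $$ (i,j)"
      unfolding K_def using ij dims by (simp del: index_mult_mat(1))
  qed (use dims in auto)
  have "transpose_mat (Ups * Xii) = transpose_mat Xii * transpose_mat Ups"
    using dims by (simp add: msimps)
  also have "\<dots> = transpose_mat Xii * ((transpose_mat Ups * Xi) * Xii)"
    using dims inv by (simp add: msimps)
  also have "\<dots> = transpose_mat Xii * (transpose_mat Xi * Ups * Xii)" by (simp only: KK)
  also have "\<dots> = transpose_mat (Xi * Xii) * (Ups * Xii)"
    using dims by (simp add: msimps)
  also have "\<dots> = Ups * Xii" using inv dims by simp
  finally show ?thesis .
qed




lemma lin_aux: "(m::complex) - d = g - p \<Longrightarrow> d - p + g = m"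
  by (simp add: algebra_simps)

lemma core:
  fixes S Si B Xc Pc Xi1 Ups1 Xii1 Xi2 Ups2 Xii2 X1 P1 X2 P2 :: "complex mat"
  assumes cS: "S \<in> carrier_mat n n" "Si \<in> carrier_mat n n" "B \<in> carrier_mat n n"
    and cX: "Xc \<in> carrier_mat n r" "Pc \<in> carrier_mat n r"
    and cXi: "Xi1 \<in> carrier_mat r r" "Ups1 \<in> carrier_mat r r" "Xii1 \<in> carrier_mat r r"
      "Xi2 \<in> carrier_mat r r" "Ups2 \<in> carrier_mat r r" "Xii2 \<in> carrier_mat r r"
    and sS: "transpose_mat S = S" and sB: "transpose_mat B = B" and sSi: "transpose_mat Si = Si"
    and r1: "\<And>M. dim_row M = n \<Longrightarrow> S * (Si * M) = M"
    and r2: "\<And>M. dim_row M = n \<Longrightarrow> Si * (S * M) = M"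
    and r3: "\<And>M. dim_row M = n \<Longrightarrow> S * (B * (S * M)) = M"
    and r4: "\<And>M. dim_row M = n \<Longrightarrow> S * (B * (Si * M)) = B * M"
    and XX: "transpose_mat Xc * Xc = 1\<^sub>m r"
    and inv1: "Xi1 * Xii1 = 1\<^sub>m r" "Xii1 * Xi1 = 1\<^sub>m r"
    and inv2: "Xi2 * Xii2 = 1\<^sub>m r" "Xii2 * Xi2 = 1\<^sub>m r"
    and nz: "\<forall>i<r. \<forall>j<r. w i \<noteq> - w j"
    and E1a: "transpose_mat Xc * B * Pc * Xi1 + transpose_mat Xc * B * Xc * Ups1 = Xi1 * diag_of r (\<lambda>i. - w i)"
    and E1b: "(1\<^sub>m r - transpose_mat Pc * B * Pc) * Xi1 + (- (transpose_mat Pc * B * Xc)) * Ups1 = Ups1 * diag_of r (\<lambda>i. - w i)"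
    and X1d: "X1 = Si * (Pc + Xc * (Ups1 * Xii1))"
    and P1d: "P1 = - (S * Xc) + X1 * (Ups1 * Xii1)"
    and E2a: "transpose_mat X1 * B * P1 * Xi2 + transpose_mat X1 * B * X1 * Ups2 = Xi2 * diag_of r w"
    and E2b: "(1\<^sub>m r - transpose_mat P1 * B * P1) * Xi2 + (- (transpose_mat P1 * B * X1)) * Ups2 = Ups2 * diag_of r w"
    and X2d: "X2 = Si * (P1 + X1 * (Ups2 * Xii2))"
    and P2d: "P2 = - (S * X1) + X2 * (Ups2 * Xii2)"
  shows "X2 = - Xc \<and> P2 = - Pc"
proof -
  define Gam1 where "Gam1 = Ups1 * Xii1"
  define D where "D = diag_of r w"
  define D1 where "D1 = diag_of r (\<lambda>i. - w i)"
  have cG: "Gam1 \<in> carrier_mat r r" "D \<in> carrier_mat r r" "D1 \<in> carrier_mat r r"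
    using cXi by (auto simp: Gam1_def D_def D1_def)
  have cX1: "X1 \<in> carrier_mat n r" "P1 \<in> carrier_mat n r" unfolding X1d P1d Gam1_def[symmetric]
    using cS cX cG by auto
  note dims = cS[unfolded carrier_mat_def, simplified] cX[unfolded carrier_mat_def, simplified]
    cXi[unfolded carrier_mat_def, simplified] cG[unfolded carrier_mat_def, simplified]
    cX1[unfolded carrier_mat_def, simplified]
  have TV: "transpose_mat (transpose_mat Xc * B * Pc) = transpose_mat Pc * B * Xc"
    using dims sB by (simp add: msimps)
  have sG: "transpose_mat Gam1 = Gam1" unfolding Gam1_def
  proof (rule gamma_sym[of "transpose_mat Xc * B * Xc" r "transpose_mat Xc * B * Pc" "1\<^sub>m r - transpose_mat Pc * B * Pc"])
    show "transpose_mat (transpose_mat Xc * B * Xc) = transpose_mat Xc * B * Xc"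
      using dims sB by (simp add: msimps)
    show "transpose_mat (1\<^sub>m r - transpose_mat Pc * B * Pc) = 1\<^sub>m r - transpose_mat Pc * B * Pc"
      using dims sB by (simp add: msimps)
    show "(1\<^sub>m r - transpose_mat Pc * B * Pc) * Xi1 + - transpose_mat (transpose_mat Xc * B * Pc) * Ups1 =
      Ups1 * diag_of r (\<lambda>i. - w i)" unfolding TV using E1b .
    show "\<forall>i<r. \<forall>j<r. - w i \<noteq> - (- w j)" using nz by (metis minus_minus)
  qed (use cS cX cXi inv1 E1a in auto)
  define Q where "Q = Pc + Xc * Gam1"
  define M1 where "M1 = transpose_mat Xc * (B * Q)"
  have cQ: "Q \<in> carrier_mat n r" "M1 \<in> carrier_mat r r" unfolding Q_def M1_def using cS cX cG by auto
  note dims = dims cQ[unfolded carrier_mat_def, simplified]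
  have X1Q: "X1 = Si * Q" unfolding X1d Q_def Gam1_def ..
  have P1Q: "P1 = - (S * Xc) + X1 * Gam1" unfolding P1d Gam1_def ..
  have M1Xi1: "M1 * Xi1 = Xi1 * D1"
  proof -
    have "M1 * Xi1 = transpose_mat Xc * B * Pc * Xi1 + transpose_mat Xc * B * Xc * Ups1"
      unfolding M1_def Q_def Gam1_def using dims inv1 by (simp add: msimps)
    thus ?thesis using E1a D1_def by simp
  qed
  have Z: "Gam1 * transpose_mat X1 + - transpose_mat P1 = transpose_mat Xc * S"
    unfolding P1Q using dims sS sG
    by (simp add: msimps) (rule eq_matI, simp_all add: dims del: index_mult_mat(1))
  define U1 where "U1 = transpose_mat X1 * B * X1"
  define V1 where "V1 = transpose_mat X1 * B * P1"
  define W1 where "W1 = 1\<^sub>m r - transpose_mat P1 * B * P1"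
  define V1' where "V1' = transpose_mat P1 * B * X1"
  have cU: "U1 \<in> carrier_mat r r" "V1 \<in> carrier_mat r r" "W1 \<in> carrier_mat r r" "V1' \<in> carrier_mat r r"
    unfolding U1_def V1_def W1_def V1'_def using cS cX1 by auto
  note dims = dims cU[unfolded carrier_mat_def, simplified]
  have UB: "Gam1 * U1 + - V1' = M1"
  proof -
    have "(Gam1 * transpose_mat X1 + - transpose_mat P1) * (B * X1) = Gam1 * U1 + - V1'"
      unfolding U1_def V1'_def using dims by (simp add: msimps)
    moreover have "(Gam1 * transpose_mat X1 + - transpose_mat P1) * (B * X1) = M1"
      unfolding Z unfolding M1_def X1Q using dims r4 by (simp add: msimps)
    ultimately show ?thesis by simp
  qed
  have WB: "W1 + Gam1 * V1 = M1 * Gam1"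
  proof (rule eq_matI)
    fix i j assume ij: "i < dim_row (M1 * Gam1)" "j < dim_col (M1 * Gam1)"
    hence i: "i < r" and j: "j < r" using dims by auto
    have e1: "(Gam1 * transpose_mat X1 + - transpose_mat P1) * (B * P1) = Gam1 * V1 + - (transpose_mat P1 * B * P1)"
      unfolding V1_def using dims by (simp add: msimps)
    have e2: "(Gam1 * transpose_mat X1 + - transpose_mat P1) * (B * P1) = - (1\<^sub>m r) + M1 * Gam1"
    proof -
      have "transpose_mat Xc * S * (B * P1) = - (1\<^sub>m r) + transpose_mat Xc * (B * (Q * Gam1))"
        unfolding P1Q X1Q using dims r3 r4 XX by (simp add: msimps)
      moreover have "M1 * Gam1 = transpose_mat Xc * (B * (Q * Gam1))"
        unfolding M1_def using dims by (simp add: msimps)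
      ultimately show ?thesis unfolding Z by simp
    qed
    note h1 = arg_cong[OF e1, of "\<lambda>M. M $$ (i,j)"]
    note h2 = arg_cong[OF e2, of "\<lambda>M. M $$ (i,j)"]
    have hh: "(M1 * Gam1) $$ (i,j) - (if i = j then 1 else 0) = (Gam1 * V1) $$ (i,j) - (transpose_mat P1 * B * P1) $$ (i,j)"
      using h1 h2 i j dims by (simp del: index_mult_mat(1))
    have "(W1 + Gam1 * V1) $$ (i,j) = (if i = j then 1 else 0) - (transpose_mat P1 * B * P1) $$ (i,j) + (Gam1 * V1) $$ (i,j)"
      unfolding W1_def using i j dims by (simp del: index_mult_mat(1))
    thus "(W1 + Gam1 * V1) $$ (i,j) = (M1 * Gam1) $$ (i,j)"
      using lin_aux[OF hh] by simp
  qed (use dims in auto)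
  define N where "N = Ups2 + Gam1 * Xi2"
  have cN: "N \<in> carrier_mat r r" unfolding N_def using cXi cG by auto
  note dims = dims cN[unfolded carrier_mat_def, simplified]
  note E2a' = E2a[folded V1_def U1_def D_def]
  note E2b' = E2b[folded V1'_def W1_def D_def]
  have ND: "N * D = M1 * N"
  proof -
    have "N * D = Ups2 * D + Gam1 * (Xi2 * D)" unfolding N_def using dims by (simp add: msimps)
    also have "\<dots> = W1 * Xi2 + (- V1') * Ups2 + Gam1 * (V1 * Xi2 + U1 * Ups2)"
      unfolding E2a' E2b' ..
    also have "\<dots> = (W1 + Gam1 * V1) * Xi2 + (Gam1 * U1 + - V1') * Ups2"
      using dims by (simp add: msimps) (rule eq_matI, simp_all add: dims del: index_mult_mat(1))
    also have "\<dots> = M1 * N" unfolding WB UB N_def using dims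
      by (simp add: msimps) (rule eq_matI, simp_all add: dims del: index_mult_mat(1))
    finally show ?thesis .
  qed
  have inv1': "\<And>K. dim_row K = r \<Longrightarrow> Xii1 * (Xi1 * K) = K"
  proof -
    fix K :: "complex mat" assume "dim_row K = r"
    thus "Xii1 * (Xi1 * K) = K" using dims inv1 assoc'[of Xii1 Xi1 K, symmetric] by simp
  qed
  have XM: "Xii1 * M1 = D1 * Xii1"
  proof -
    have "Xii1 * M1 = Xii1 * (M1 * Xi1) * Xii1" using dims inv1 by (simp add: msimps)
    also have "\<dots> = D1 * Xii1" unfolding M1Xi1 using dims inv1' by (simp add: msimps)
    finally show ?thesis .
  qed
  define E where "E = Xii1 * N"
  have cE: "E \<in> carrier_mat r r" unfolding E_def using cXi cN by auto
  have "E * diag_of r w = diag_of r (\<lambda>i. - w i) * E"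
  proof -
    have "E * diag_of r w = Xii1 * (N * D)" unfolding E_def D_def using dims by (simp add: msimps)
    also have "\<dots> = (Xii1 * M1) * N" unfolding ND using dims by (simp add: msimps)
    also have "\<dots> = diag_of r (\<lambda>i. - w i) * E" unfolding XM E_def D1_def using dims by (simp add: msimps)
    finally show ?thesis .
  qed
  from sylv_zero[OF cE this nz] have E0: "E = 0\<^sub>m r r" .
  have N0: "N = 0\<^sub>m r r"
  proof -
    have "N = Xi1 * E" unfolding E_def using dims inv1 assoc'[of Xi1 Xii1 N, symmetric] by simp
    thus ?thesis using E0 cXi by simp
  qed
  have U2: "Ups2 = - (Gam1 * Xi2)"
  proof (rule eq_matI)
    fix i j assume ij: "i < dim_row (- (Gam1 * Xi2))" "j < dim_col (- (Gam1 * Xi2))"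
    hence i: "i < r" and j: "j < r" using dims by auto
    have "N $$ (i,j) = 0" using N0 i j by simp
    thus "Ups2 $$ (i,j) = (- (Gam1 * Xi2)) $$ (i,j)" unfolding N_def using i j dims
      by (simp del: index_mult_mat(1) add: add_eq_0_iff)
  qed (use dims in auto)
  have G2: "Ups2 * Xii2 = - Gam1" unfolding U2 using dims inv2 by (simp add: msimps)
  have PX: "P1 + X1 * (- Gam1) = - (S * Xc)"
    unfolding P1Q using dims
    by (simp add: msimps) (rule eq_matI, simp_all add: dims del: index_mult_mat(1))
  have X2e: "X2 = - Xc" unfolding X2d G2 PX using dims r2 by (simp add: msimps)
  have P2e: "P2 = - Pc"
  proof -
    have "P2 = - (S * (Si * Q)) + Xc * Gam1" unfolding P2d X2e G2 X1Q using dims by (simp add: msimps)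
    also have "\<dots> = - Q + Xc * Gam1" using dims r1 by simp
    also have "\<dots> = - Pc" unfolding Q_def
      by (rule eq_matI, simp_all add: dims del: index_mult_mat(1))
    finally show ?thesis .
  qed
  show ?thesis using X2e P2e by simp
qed


theorem theorem6p4:
  fixes n r :: nat and a :: "nat \<Rightarrow> real" and lam :: real and S :: "complex mat"
    and w :: "nat \<Rightarrow> complex" and X P :: "real mat"
    and X1 P1 X2 P2 :: "complex mat"
  assumes "1 \<le> r" and "r \<le> n"
    and "\<forall>i<n. lam \<noteq> a i"
    and "S \<in> carrier_mat n n" and "diagonal_mat S" and "S * S = Amat n a lam"
    and "X \<in> carrier_mat n r" and "P \<in> carrier_mat n r"
    and "transpose_mat X * X = 1\<^sub>m r"
    and "transpose_mat X * P + transpose_mat P * X = 0\<^sub>m r r"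
    and "\<forall>i<r. \<forall>j<r. i \<noteq> j \<longrightarrow> w i \<noteq> w j"
    and "\<forall>i<r. \<forall>j<r. w i \<noteq> - w j"
    and "neumann_branch n r a lam S (\<lambda>i. - w i)
           (map_mat complex_of_real X) (map_mat complex_of_real P) X1 P1"
    and "neumann_branch n r a lam S w X1 P1 X2 P2"
  shows "X2 = - map_mat complex_of_real X \<and> P2 = - map_mat complex_of_real P"
proof -
  note A = assms
  define Xc where "Xc = map_mat complex_of_real X"
  define Pc where "Pc = map_mat complex_of_real P"
  define B where "B = Ainv n a lam"
  define Si where "Si = diag_inv S"
  define s where "s = (\<lambda>i. S $$ (i,i))"
  have cX: "Xc \<in> carrier_mat n r" "Pc \<in> carrier_mat n r" using A(7,8) by (auto simp: Xc_def Pc_def)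
  have XX: "transpose_mat Xc * Xc = 1\<^sub>m r"
  proof -
    have "map_mat complex_of_real (transpose_mat X * X) = map_mat complex_of_real (transpose_mat X) * Xc"
      unfolding Xc_def by (rule of_real_hom.mat_hom_mult) (use A(7) in auto)
    thus ?thesis using A(9) unfolding Xc_def by (simp add: map_mat_transpose of_real_hom.mat_hom_one)
  qed
  have Sd: "S = diag_of n s" unfolding s_def using diagonal_is_diag_of[OF A(4,5)] .
  have Bd: "B = diag_of n (\<lambda>i. 1 / complex_of_real (lam - a i))"
    unfolding B_def Ainv_def diag_of_def by (intro eq_matI) auto
  have Sid: "Si = diag_of n (\<lambda>i. 1 / s i)"
    unfolding Si_def diag_inv_def diag_of_def s_def using A(4) by auto
  have ss: "s i * s i = complex_of_real (lam - a i)" if "i < n" for i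
  proof -
    have "diag_of n (\<lambda>i. s i * s i) = diag_of n (\<lambda>i. complex_of_real (lam - a i))"
      using A(6) unfolding Sd diag_of_mult by (simp add: Amat_def diag_of_def del: of_real_diff)
    from arg_cong[OF this, of "\<lambda>M. M $$ (i,i)"] show ?thesis using that by (simp add: diag_of_def)
  qed
  have snz: "s i \<noteq> 0" if "i < n" for i
    using ss[OF that] A(3) that by auto
  have cS: "S \<in> carrier_mat n n" "Si \<in> carrier_mat n n" "B \<in> carrier_mat n n"
    using A(4) by (auto simp: Sid Bd)
  have rule: "diag_of n f * (diag_of n g * M) = diag_of n (\<lambda>i. f i * g i) * M" if "dim_row M = n" for f g and M :: "complex mat"
    using that assoc'[of "diag_of n f" "diag_of n g" M] by (simp add: diag_of_mult)
  have rule3: "diag_of n f * (diag_of n g * (diag_of n h * M)) = diag_of n (\<lambda>i. f i * g i * h i) * M" if "dim_row M = n" for f g h and M :: "complex mat"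
    using that by (simp add: rule mult.assoc)
  have r1: "\<And>M. dim_row M = n \<Longrightarrow> S * (Si * M) = M"
    unfolding Sd Sid by (subst rule, simp, subst diag_of_one, use snz in auto)
  have r2: "\<And>M. dim_row M = n \<Longrightarrow> Si * (S * M) = M"
    unfolding Sd Sid by (subst rule, simp, subst diag_of_one, use snz in auto)
  have r3: "\<And>M. dim_row M = n \<Longrightarrow> S * (B * (S * M)) = M"
    unfolding Sd Bd by (subst rule3, simp, subst diag_of_one, use snz ss A(3) in \<open>auto simp: field_simps\<close>)
  have r4: "\<And>M. dim_row M = n \<Longrightarrow> S * (B * (Si * M)) = B * M"
    unfolding Sd Bd Sid by (subst rule3, simp, subst diag_of_cong[of n _ "\<lambda>i. 1 / complex_of_real (lam - a i)"], use snz in auto)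
  have sym: "transpose_mat S = S" "transpose_mat B = B" "transpose_mat Si = Si"
    unfolding Sd Bd Sid by (simp_all add: diag_of_transpose)
  obtain Xi1 Ups1 Xii1 where b1: "Xi1 \<in> carrier_mat r r" "Ups1 \<in> carrier_mat r r" "Xii1 \<in> carrier_mat r r"
    "Xi1 * Xii1 = 1\<^sub>m r" "Xii1 * Xi1 = 1\<^sub>m r"
    "Lax n r a lam Xc Pc * (Xi1 @\<^sub>r Ups1) = (Xi1 @\<^sub>r Ups1) * diag_of r (\<lambda>i. - w i)"
    "X1 = Si * (Pc + Xc * (Ups1 * Xii1))" "P1 = - (S * Xc) + X1 * (Ups1 * Xii1)"
    using A(13) unfolding neumann_branch_def Xc_def[symmetric] Pc_def[symmetric] Si_def[symmetric] Let_def by blast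
  have cX1: "X1 \<in> carrier_mat n r" "P1 \<in> carrier_mat n r" using b1 cS cX by auto
  obtain Xi2 Ups2 Xii2 where b2: "Xi2 \<in> carrier_mat r r" "Ups2 \<in> carrier_mat r r" "Xii2 \<in> carrier_mat r r"
    "Xi2 * Xii2 = 1\<^sub>m r" "Xii2 * Xi2 = 1\<^sub>m r"
    "Lax n r a lam X1 P1 * (Xi2 @\<^sub>r Ups2) = (Xi2 @\<^sub>r Ups2) * diag_of r w"
    "X2 = Si * (P1 + X1 * (Ups2 * Xii2))" "P2 = - (S * X1) + X2 * (Ups2 * Xii2)"
    using A(14) unfolding neumann_branch_def Si_def[symmetric] Let_def by blast
  have blocks: "transpose_mat Y * B * Z * Xi + transpose_mat Y * B * Y * Ups = Xi * diag_of r d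
      \<and> (1\<^sub>m r - transpose_mat Z * B * Z) * Xi + (- (transpose_mat Z * B * Y)) * Ups = Ups * diag_of r d"
    if "Y \<in> carrier_mat n r" "Z \<in> carrier_mat n r" "Xi \<in> carrier_mat r r" "Ups \<in> carrier_mat r r"
      "Lax n r a lam Y Z * (Xi @\<^sub>r Ups) = (Xi @\<^sub>r Ups) * diag_of r d" for Y Z Xi Ups d
  proof (rule append_rows_inj)
    show "(transpose_mat Y * B * Z * Xi + transpose_mat Y * B * Y * Ups) @\<^sub>r
      ((1\<^sub>m r - transpose_mat Z * B * Z) * Xi + (- (transpose_mat Z * B * Y)) * Ups) =
      (Xi * diag_of r d) @\<^sub>r (Ups * diag_of r d)"
    proof -
      have L: "Lax n r a lam Y Z * (Xi @\<^sub>r Ups) = (transpose_mat Y * B * Z * Xi + transpose_mat Y * B * Y * Ups) @\<^sub>r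
      ((1\<^sub>m r - transpose_mat Z * B * Z) * Xi + (- (transpose_mat Z * B * Y)) * Ups)"
        unfolding Lax_def B_def[symmetric]
        by (rule four_block_append_rows[where ?r1.0=r and ?n1.0=r and ?n2.0=r and ?r2.0=r and m=r]) (use that cS in auto)
      have R: "(Xi @\<^sub>r Ups) * diag_of r d = (Xi * diag_of r d) @\<^sub>r (Ups * diag_of r d)"
        by (rule append_rows_mult[where ?nr1.0=r and ?nr2.0=r and m=r and k=r]) (use that in auto)
      show ?thesis using that(5) unfolding L R .
    qed
  qed (use that cS in auto)
  note e1 = blocks[OF cX b1(1,2,6)]
  note e2 = blocks[OF cX1 b2(1,2,6)]
  show ?thesis unfolding Xc_def[symmetric] Pc_def[symmetric]
    by (rule core[OF cS cX b1(1-3) b2(1-3) sym r1 r2 r3 r4 XX b1(4,5) b2(4,5) A(12)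
        e1[THEN conjunct1] e1[THEN conjunct2] b1(7,8) e2[THEN conjunct1] e2[THEN conjunct2] b2(7,8)])
qed


end
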